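(* Let $\Omega\subset\mathbb R^d$ be a bounded Lipschitz domain and let $\alpha:\Omega\times\mathbb R_+\to\mathbb R_+$ satisfy the assumptions in the context, and assume moreover that $\alpha(x,\cdot)$ is monotone decreasing for every $x\in\Omega$, i.e. $\alpha(x,t_1)\ge\alpha(x,t_2)$ whenever $0\le t_1\le t_2$ and $x\in\Omega$. Define $\mathcal J(v)=\int_0^1 a(sv;sv,v)\,ds$ for $v\in H^1_0(\Omega)$. Then $$\mathcal J(v)-\mathcal J(w)\le\tfrac12\big(a(w;v,v)-a(w;w,w)\big)\qquad\forall v,w\in H^1_0(\Omega).$$
   Context: $\alpha(x,\cdot)$ is $\mathcal C^1$ for every $x\in\Omega$ and there are constants $0<c_a\le C_a$ with $c_a\le \alpha(x,t^2)+2t^2D_2\alpha(x,t^2)\le C_a$ for all $x\in\Omega$, $t>0$, where $D_2\alpha$ is the partial derivative with respect to the second variable (this implies $c_a\le\alpha\le C_a$). For $w,u,v\in H^1_0(\Omega)$, $a(w;u,v)=\int_\Omega\alpha(\cdot,|\nabla w|^2)\nabla u\cdot\nabla v$. *)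

theory Defs
  imports "HOL-Analysis.Analysis"
begin

definition lipschitz_domain :: "(real^'d) set \<Rightarrow> bool" where
  "lipschitz_domain \<Omega> \<longleftrightarrow> open \<Omega> \<and> connected \<Omega> \<and> \<Omega> \<noteq> {} \<and>
     (\<forall>p\<in>frontier \<Omega>. \<exists>r>0. \<exists>\<nu> L h. norm \<nu> = 1 \<and>
        lipschitz_on L {y. y \<bullet> \<nu> = 0} (h :: real^'d \<Rightarrow> real) \<and>
        \<Omega> \<inter> ball p r = {x \<in> ball p r. x \<bullet> \<nu> < h (x - (x \<bullet> \<nu>) *\<^sub>R \<nu>)})"

definition bounded_lipschitz_domain :: "(real^'d) set \<Rightarrow> bool" where
  "bounded_lipschitz_domain \<Omega> \<longleftrightarrow> bounded \<Omega> \<and> lipschitz_domain \<Omega>"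

definition C1c_test :: "(real^'d) set \<Rightarrow> (real^'d \<Rightarrow> real) \<Rightarrow> (real^'d \<Rightarrow> real^'d) \<Rightarrow> bool" where
  "C1c_test \<Omega> \<phi> D\<phi> \<longleftrightarrow>
     (\<forall>x. (\<phi> has_derivative (\<lambda>h. D\<phi> x \<bullet> h)) (at x)) \<and> continuous_on UNIV D\<phi> \<and>
     compact (closure {x. \<phi> x \<noteq> 0}) \<and> closure {x. \<phi> x \<noteq> 0} \<subseteq> \<Omega>"

text \<open>H10 Omega u G: u belongs to H^1_0(Omega) with (weak) gradient G, i.e. (u,G) is the
  H^1(Omega)-limit of (phi_k, grad phi_k) for compactly supported C^1 functions phi_k.\<close>
definition H10 :: "(real^'d) set \<Rightarrow> (real^'d \<Rightarrow> real) \<Rightarrow> (real^'d \<Rightarrow> real^'d) \<Rightarrow> bool" where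
  "H10 \<Omega> u G \<longleftrightarrow>
     u \<in> borel_measurable (lebesgue_on \<Omega>) \<and> G \<in> borel_measurable (lebesgue_on \<Omega>) \<and>
     integrable (lebesgue_on \<Omega>) (\<lambda>x. (u x)\<^sup>2) \<and>
     integrable (lebesgue_on \<Omega>) (\<lambda>x. (norm (G x))\<^sup>2) \<and>
     (\<exists>\<phi> D\<phi>. (\<forall>k::nat. C1c_test \<Omega> (\<phi> k) (D\<phi> k)) \<and>
        (\<lambda>k. \<integral>x. (\<phi> k x - u x)\<^sup>2 \<partial>lebesgue_on \<Omega>) \<longlonglongrightarrow> 0 \<and>
        (\<lambda>k. \<integral>x. (norm (D\<phi> k x - G x))\<^sup>2 \<partial>lebesgue_on \<Omega>) \<longlonglongrightarrow> 0)"

text \<open>a(w;u,v) = int_Omega alpha(x,|grad w|^2) grad u . grad v, expressed via the gradients.\<close>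
definition a_form :: "(real^'d \<Rightarrow> real \<Rightarrow> real) \<Rightarrow> (real^'d) set \<Rightarrow>
    (real^'d \<Rightarrow> real^'d) \<Rightarrow> (real^'d \<Rightarrow> real^'d) \<Rightarrow> (real^'d \<Rightarrow> real^'d) \<Rightarrow> real" where
  "a_form \<alpha> \<Omega> Gw Gu Gv = (\<integral>x. \<alpha> x ((norm (Gw x))\<^sup>2) * (Gu x \<bullet> Gv x) \<partial>lebesgue_on \<Omega>)"

text \<open>J(v) = int_0^1 a(sv; sv, v) ds, where grad(sv) = s grad v.\<close>
definition J_energy :: "(real^'d \<Rightarrow> real \<Rightarrow> real) \<Rightarrow> (real^'d) set \<Rightarrow> (real^'d \<Rightarrow> real^'d) \<Rightarrow> real" where
  "J_energy \<alpha> \<Omega> Gv = (\<integral>s. a_form \<alpha> \<Omega> (\<lambda>x. s *\<^sub>R Gv x) (\<lambda>x. s *\<^sub>R Gv x) Gv \<partial>lebesgue_on {0..1})"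

end

theory Submission
  imports Defs
begin

lemma prim_formula:
  fixes a :: "real \<Rightarrow> real" and p T :: real
  assumes ac: "continuous_on {0..T} a" and p: "0 \<le> p" "p \<le> T"
  shows "(LINT s|lebesgue_on {0..1}. a (s\<^sup>2 * p) * (s * p)) = integral {0..p} a / 2"
proof -
  define P where "P t = integral {0..t} a" for t
  have dP: "(P has_real_derivative a t) (at t within {0..T})" if "t \<in> {0..T}" for t
    unfolding P_def by (rule integral_has_real_derivative[OF ac that])
  have im: "(\<lambda>s. s\<^sup>2 * p) ` {0..1} \<subseteq> {0..T}"
  proof
    fix y assume "y \<in> (\<lambda>s. s\<^sup>2 * p) ` {0..1}"
    then obtain r where r: "r \<in> {0..1}" "y = r\<^sup>2 * p" by auto
    have "r\<^sup>2 \<le> 1" using r by (auto intro: power_le_one)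
    hence "r\<^sup>2 * p \<le> 1 * p" using p by (intro mult_right_mono) auto
    then show "y \<in> {0..T}" using r p by auto
  qed
  have cg: "continuous_on {0..1} (\<lambda>s. a (s\<^sup>2 * p) * (s * p))"
    by (intro continuous_intros continuous_on_compose2[OF ac _ im])
  have "((\<lambda>s. a (s\<^sup>2 * p) * (s * p)) has_integral (P (1\<^sup>2 * p) / 2 - P (0\<^sup>2*p) / 2)) {0..1}"
  proof (rule fundamental_theorem_of_calculus)
    fix s :: real assume s: "s \<in> {0..1}"
    have "s\<^sup>2 * p \<in> {0..T}" using im s by blast
    have d1: "(P has_real_derivative a (s\<^sup>2 * p)) (at (s\<^sup>2 * p) within ((\<lambda>s. s\<^sup>2 * p) ` {0..1}))"
      using dP[OF \<open>s\<^sup>2 * p \<in> {0..T}\<close>] im by (rule has_field_derivative_subset)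
    have d2: "((\<lambda>s. s\<^sup>2 * p) has_real_derivative (2 * s * p)) (at s within {0..1})"
      by (auto intro!: derivative_eq_intros)
    have "((\<lambda>s. P (s\<^sup>2 * p) / 2) has_real_derivative (a (s\<^sup>2 * p) * (2 * s * p) / 2)) (at s within {0..1})"
      using DERIV_image_chain[OF d1 d2] by (auto intro!: derivative_eq_intros simp: o_def)
    then show "((\<lambda>s. P (s\<^sup>2 * p) / 2) has_vector_derivative (a (s\<^sup>2 * p) * (s * p))) (at s within {0..1})"
      by (simp add: has_real_derivative_iff_has_vector_derivative[symmetric])
  qed simp
  then have "integral {0..1} (\<lambda>s. a (s\<^sup>2 * p) * (s * p)) = P p / 2"
    by (simp add: integral_unique P_def)
  moreover have "(LINT s|lebesgue_on {0..1}. a (s\<^sup>2 * p) * (s * p)) = integral {0..1} (\<lambda>s. a (s\<^sup>2 * p) * (s * p))"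
    by (rule lebesgue_integral_eq_integral[OF continuous_imp_integrable_real[OF cg]]) simp
  ultimately show ?thesis by (simp add: P_def)
qed

lemma prim_ineq:
  fixes a :: "real \<Rightarrow> real" and p q T :: real
  assumes ac: "continuous_on {0..T} a" and p: "0 \<le> p" "p \<le> T" and q: "0 \<le> q" "q \<le> T"
    and dec: "\<And>x y. 0 \<le> x \<Longrightarrow> x \<le> y \<Longrightarrow> a y \<le> a x"
  shows "integral {0..p} a - integral {0..q} a \<le> a q * (p - q)"
proof (cases "q \<le> p")
  case True
  have int: "a integrable_on {0..p}"
    using ac p by (intro integrable_continuous_interval continuous_on_subset[OF ac]) auto
  have "integral {0..q} a + integral {q..p} a = integral {0..p} a"
    by (rule Henstock_Kurzweil_Integration.integral_combine[OF _ _ int]) (use True q in auto)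
  moreover have "integral {q..p} a \<le> integral {q..p} (\<lambda>_. a q)"
    using True q p
    by (intro integral_le integrable_continuous_interval continuous_on_subset[OF ac]) (auto intro: dec)
  ultimately show ?thesis using True by (simp add: algebra_simps)
next
  case False
  have int: "a integrable_on {0..q}"
    using ac q by (intro integrable_continuous_interval continuous_on_subset[OF ac]) auto
  have "integral {0..p} a + integral {p..q} a = integral {0..q} a"
    by (rule Henstock_Kurzweil_Integration.integral_combine[OF _ _ int]) (use False p in auto)
  moreover have "integral {p..q} (\<lambda>_. a q) \<le> integral {p..q} a"
    using False q p
    by (intro integral_le integrable_continuous_interval continuous_on_subset[OF ac]) (auto intro: dec)
  ultimately show ?thesis using False by (simp add: algebra_simps)
qed


lemma alpha_bound:
  fixes a Da :: "real \<Rightarrow> real" and C :: real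
  assumes deriv: "\<And>t. 0 \<le> t \<Longrightarrow> (a has_real_derivative Da t) (at t within {0..})"
    and bnd: "\<And>t. 0 < t \<Longrightarrow> a (t\<^sup>2) + 2 * t\<^sup>2 * Da (t\<^sup>2) \<le> C"
    and t: "0 \<le> t"
  shows "a t \<le> C"
proof -
  have ca: "continuous_on {0..} a"
    by (rule DERIV_continuous_on) (use deriv in auto)
  have pos: "a (r\<^sup>2) \<le> C" if r: "0 < r" for r
  proof -
    define g where "g u = u * a (u\<^sup>2)" for u
    have dg: "(g has_real_derivative (a (u\<^sup>2) + 2 * u\<^sup>2 * Da (u\<^sup>2))) (at u)" if "0 < u" for u
    proof -
      have "(a has_real_derivative Da (u\<^sup>2)) (at (u\<^sup>2) within {0<..})"
        by (rule has_field_derivative_subset[OF deriv]) (use that in auto)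
      moreover have "at (u\<^sup>2) within {0<..} = at (u\<^sup>2)"
        by (rule at_within_open) (use that in auto)
      ultimately have da: "(a has_real_derivative Da (u\<^sup>2)) (at (u\<^sup>2))"
        by simp
      have "((\<lambda>u. u * a (u\<^sup>2)) has_real_derivative (1 * a (u\<^sup>2) + u * (Da (u\<^sup>2) * (2 * u)))) (at u)"
      proof -
        have d2: "((\<lambda>u. a (u\<^sup>2)) has_real_derivative Da (u\<^sup>2) * (2 * u)) (at u)"
          by (rule DERIV_chain2[of a "Da (u\<^sup>2)" "\<lambda>u. u\<^sup>2" u, OF da]) (auto intro!: derivative_eq_intros)
        show ?thesis using DERIV_mult[OF DERIV_ident d2] by (simp add: mult_ac)
      qed
      then show ?thesis unfolding g_def by (simp add: algebra_simps power2_eq_square)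
    qed
    have cg: "continuous_on {0..r} g"
      unfolding g_def by (intro continuous_intros continuous_on_compose2[OF ca]) auto
    obtain l z where z: "0 < z" "z < r" "(g has_real_derivative l) (at z)" "g r - g 0 = (r - 0) * l"
      using MVT[OF r cg] dg real_differentiable_def by blast
    have "l = a (z\<^sup>2) + 2 * z\<^sup>2 * Da (z\<^sup>2)" using DERIV_unique[OF z(3) dg[OF z(1)]] .
    then have "l \<le> C" using bnd[OF z(1)] by simp
    then have "r * a (r\<^sup>2) \<le> r * C" using z(4) r by (simp add: g_def mult_left_mono)
    then show ?thesis using r by simp
  qed
  show ?thesis
  proof (cases "t = 0")
    case False
    then show ?thesis using pos[of "sqrt t"] t by simp
  next
    case True
    have "((\<lambda>n. a ((sqrt (inverse (real (Suc n))))\<^sup>2)) \<longlonglongrightarrow> a 0)"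
    proof -
      have "(\<lambda>n. inverse (real (Suc n))) \<longlonglongrightarrow> 0" by (rule LIMSEQ_inverse_real_of_nat)
      then have "(\<lambda>n. a (inverse (real (Suc n)))) \<longlonglongrightarrow> a 0"
        by (rule continuous_on_tendsto_compose[OF ca]) auto
      then show ?thesis by simp
    qed
    moreover have "\<And>n. a ((sqrt (inverse (real (Suc n))))\<^sup>2) \<le> C" by (intro pos) auto
    ultimately show ?thesis using True by (simp add: LIMSEQ_le_const2)
  qed
qed

lemma carath_meas:
  fixes \<alpha> :: "'b \<Rightarrow> real \<Rightarrow> real" and f :: "'a \<Rightarrow> real"
  assumes am: "\<And>t. (\<lambda>x. \<alpha> x t) \<in> borel_measurable N"
    and g: "g \<in> measurable M N" and f: "f \<in> borel_measurable M"
    and fnn: "\<And>z. z \<in> space M \<Longrightarrow> 0 \<le> f z"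
    and ac: "\<And>z. z \<in> space M \<Longrightarrow> continuous_on {0..} (\<alpha> (g z))"
  shows "(\<lambda>z. \<alpha> (g z) (f z)) \<in> borel_measurable M"
proof (rule borel_measurable_LIMSEQ_real)
  define c where "c n z = real_of_int \<lceil>f z * real (Suc n)\<rceil> / real (Suc n)" for n z
  show "(\<lambda>n. \<alpha> (g z) (c n z)) \<longlonglongrightarrow> \<alpha> (g z) (f z)" if z: "z \<in> space M" for z
  proof (rule continuous_on_tendsto_compose[OF ac[OF z]])
    have lo: "f z \<le> c n z" for n
      unfolding c_def by (simp add: pos_le_divide_eq ceiling_correct del: of_nat_Suc)
    have hi: "c n z \<le> f z + inverse (real (Suc n))" for n
    proof -
      have "real_of_int \<lceil>f z * real (Suc n)\<rceil> \<le> f z * real (Suc n) + 1"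
        by linarith
      then show ?thesis unfolding c_def by (simp add: divide_simps del: of_nat_Suc)
    qed
    have lim: "(\<lambda>n. f z + inverse (real (Suc n))) \<longlonglongrightarrow> f z + 0"
      by (intro tendsto_intros LIMSEQ_inverse_real_of_nat)
    show "(\<lambda>n. c n z) \<longlonglongrightarrow> f z"
      by (rule tendsto_sandwich[of "\<lambda>n. f z" _ _ "\<lambda>n. f z + inverse (real (Suc n))"])
         (use lo hi lim in auto)
    show "f z \<in> {0..}" using fnn[OF z] by simp
    show "\<forall>\<^sub>F n in sequentially. c n z \<in> {0..}"
      using lo fnn[OF z] by (auto intro: order_trans always_eventually)
  qed
  show "(\<lambda>z. \<alpha> (g z) (c n z)) \<in> borel_measurable M" for n
  proof -
    have "(\<lambda>z. (\<lambda>i::int. \<alpha> (g z) (real_of_int i / real (Suc n))) \<lceil>f z * real (Suc n)\<rceil>) \<in> borel_measurable M"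
    proof (rule measurable_compose_countable[where f="\<lambda>i z. \<alpha> (g z) (real_of_int i / real (Suc n))"])
      show "(\<lambda>z. \<alpha> (g z) (real_of_int i / real (Suc n))) \<in> borel_measurable M" for i
        by (rule measurable_compose[OF g am])
      show "(\<lambda>z. \<lceil>f z * real (Suc n)\<rceil>) \<in> measurable M (count_space UNIV)"
        unfolding measurable_count_space_eq2_countable
      proof safe
        fix i :: int
        have "(\<lambda>z. \<lceil>f z * real (Suc n)\<rceil>) -` {i} \<inter> space M
              = {z \<in> space M. real_of_int i - 1 < f z * real (Suc n) \<and> f z * real (Suc n) \<le> real_of_int i}"
          by (auto simp: ceiling_eq_iff del: of_nat_Suc; linarith)
        also have "\<dots> \<in> sets M" using f by measurable
        finally show "(\<lambda>z. \<lceil>f z * real (Suc n)\<rceil>) -` {i} \<inter> space M \<in> sets M" .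
      qed auto
    qed
    then show ?thesis unfolding c_def by simp
  qed
qed

theorem lemma4p1:
  fixes \<Omega> :: "(real^'d) set"
    and \<alpha> D\<alpha> :: "real^'d \<Rightarrow> real \<Rightarrow> real"
    and c_a C_a :: real
    and v w :: "real^'d \<Rightarrow> real"
    and Gv Gw :: "real^'d \<Rightarrow> real^'d"
  assumes dom: "bounded_lipschitz_domain \<Omega>"
    and meas: "\<And>t. (\<lambda>x. \<alpha> x t) \<in> borel_measurable (lebesgue_on \<Omega>)"
    and nonneg: "\<And>x t. x \<in> \<Omega> \<Longrightarrow> 0 \<le> t \<Longrightarrow> 0 \<le> \<alpha> x t"
    and deriv: "\<And>x t. x \<in> \<Omega> \<Longrightarrow> 0 \<le> t \<Longrightarrow>
                  (\<alpha> x has_real_derivative D\<alpha> x t) (at t within {0..})"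
    and deriv_cont: "\<And>x. x \<in> \<Omega> \<Longrightarrow> continuous_on {0..} (D\<alpha> x)"
    and cpos: "0 < c_a" "c_a \<le> C_a"
    and bounds: "\<And>x t. x \<in> \<Omega> \<Longrightarrow> 0 < t \<Longrightarrow>
                  c_a \<le> \<alpha> x (t\<^sup>2) + 2 * t\<^sup>2 * D\<alpha> x (t\<^sup>2) \<and>
                  \<alpha> x (t\<^sup>2) + 2 * t\<^sup>2 * D\<alpha> x (t\<^sup>2) \<le> C_a"
    and decr: "\<And>x t1 t2. x \<in> \<Omega> \<Longrightarrow> 0 \<le> t1 \<Longrightarrow> t1 \<le> t2 \<Longrightarrow> \<alpha> x t2 \<le> \<alpha> x t1"
    and v: "H10 \<Omega> v Gv"
    and w: "H10 \<Omega> w Gw"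
  shows "J_energy \<alpha> \<Omega> Gv - J_energy \<alpha> \<Omega> Gw
           \<le> (a_form \<alpha> \<Omega> Gw Gv Gv - a_form \<alpha> \<Omega> Gw Gw Gw) / 2"
proof -
  define M1 where "M1 = lebesgue_on {0..1::real}"
  define M2 where "M2 = lebesgue_on \<Omega>"
  have bd: "bounded \<Omega>" and op: "open \<Omega>"
    using dom unfolding bounded_lipschitz_domain_def lipschitz_domain_def by auto
  have lm: "\<Omega> \<in> lmeasurable" by (rule lmeasurable_open[OF bd op])
  have Oms: "\<Omega> \<in> sets lebesgue" using lm by (simp add: fmeasurable_def)
  interpret F1: finite_measure M1 unfolding M1_def
    by (rule finite_measure_lebesgue_on) simp
  interpret F2: finite_measure M2 unfolding M2_def
    by (rule finite_measure_lebesgue_on[OF lm])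
  interpret P: pair_sigma_finite M1 M2 by unfold_locales
  have sp1: "space M1 = {0..1}" unfolding M1_def by simp
  have sp2: "space M2 = \<Omega>" unfolding M2_def by simp
  have ac: "continuous_on {0..} (\<alpha> x)" if "x \<in> \<Omega>" for x
    by (rule DERIV_continuous_on) (use deriv[OF that] in auto)
  have abd: "\<alpha> x t \<le> C_a" if "x \<in> \<Omega>" "0 \<le> t" for x t
    by (rule alpha_bound[where Da="D\<alpha> x"]) (use deriv[OF that(1)] bounds[OF that(1)] that in auto)
  have meas2: "\<And>t. (\<lambda>x. \<alpha> x t) \<in> borel_measurable M2" using meas unfolding M2_def .
  have Cnn: "0 \<le> C_a" using cpos by simp

  have key: "J_energy \<alpha> \<Omega> G = (\<integral>x. (LINT s|M1. \<alpha> x (s\<^sup>2 * (norm (G x))\<^sup>2) * (s * (norm (G x))\<^sup>2)) \<partial>M2)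
     \<and> integrable M2 (\<lambda>x. LINT s|M1. \<alpha> x (s\<^sup>2 * (norm (G x))\<^sup>2) * (s * (norm (G x))\<^sup>2))"
    if H: "H10 \<Omega> u G" for u G
  proof -
    define p where "p x = (norm (G x))\<^sup>2" for x
    have Gm: "G \<in> borel_measurable M2" and pint: "integrable M2 p"
      using H unfolding H10_def M2_def p_def by auto
    have pm[measurable]: "p \<in> borel_measurable M2" using Gm unfolding p_def by measurable
    define f where "f s x = \<alpha> x (s\<^sup>2 * p x) * (s * p x)" for s x
    have psnd: "(\<lambda>z. p (snd z)) \<in> borel_measurable (M1 \<Otimes>\<^sub>M M2)"
      using measurable_compose[OF measurable_snd pm] by (simp add: o_def)
    have hid: "(\<lambda>s::real. s) \<in> borel_measurable M1"
      unfolding M1_def by (intro measurable_restrict_space1 measurable_completion) simp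
    have hfst: "(\<lambda>z. fst z) \<in> borel_measurable (M1 \<Otimes>\<^sub>M M2)"
      by (rule measurable_compose[OF measurable_fst hid])
    have fm: "case_prod f \<in> borel_measurable (M1 \<Otimes>\<^sub>M M2)"
    proof -
      have "(\<lambda>z. \<alpha> (snd z) ((fst z)\<^sup>2 * p (snd z))) \<in> borel_measurable (M1 \<Otimes>\<^sub>M M2)"
      proof (rule carath_meas[OF meas2])
        show "snd \<in> measurable (M1 \<Otimes>\<^sub>M M2) M2" by simp
        show "(\<lambda>z. (fst z)\<^sup>2 * p (snd z)) \<in> borel_measurable (M1 \<Otimes>\<^sub>M M2)"
          by (rule borel_measurable_times[OF borel_measurable_power[OF hfst] psnd])
        show "0 \<le> (fst z)\<^sup>2 * p (snd z)" for z by (simp add: p_def)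
        show "continuous_on {0..} (\<alpha> (snd z))" if "z \<in> space (M1 \<Otimes>\<^sub>M M2)" for z
          using that by (intro ac) (auto simp: space_pair_measure sp2)
      qed
      moreover have "(\<lambda>z. fst z * p (snd z)) \<in> borel_measurable (M1 \<Otimes>\<^sub>M M2)"
          by (rule borel_measurable_times[OF hfst psnd])
      ultimately show ?thesis unfolding f_def case_prod_beta by (rule borel_measurable_times)
    qed
    have psnd: "(\<lambda>z. p (snd z)) \<in> borel_measurable (M1 \<Otimes>\<^sub>M M2)"
      using measurable_compose[OF measurable_snd pm] by (simp add: o_def)
    have gint: "integrable (M1 \<Otimes>\<^sub>M M2) (\<lambda>z. C_a * p (snd z))"
    proof (rule P.Fubini_integrable)
      show "(\<lambda>z. C_a * p (snd z)) \<in> borel_measurable (M1 \<Otimes>\<^sub>M M2)"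
        by (rule borel_measurable_times[OF _ psnd]) simp
      show "integrable M1 (\<lambda>s. \<integral>x. norm (C_a * p (snd (s, x))) \<partial>M2)" by simp
      show "AE s in M1. integrable M2 (\<lambda>x. C_a * p (snd (s, x)))" using pint by simp
    qed
    have fint: "integrable (M1 \<Otimes>\<^sub>M M2) (case_prod f)"
    proof (rule Bochner_Integration.integrable_bound[OF gint fm], rule AE_I2)
      fix z assume z: "z \<in> space (M1 \<Otimes>\<^sub>M M2)"
      obtain s x where zz: "z = (s, x)" "s \<in> {0..1}" "x \<in> \<Omega>"
        using z by (auto simp: space_pair_measure sp1 sp2)
      have p0: "0 \<le> p x" by (simp add: p_def)
      have a0: "0 \<le> \<alpha> x (s\<^sup>2 * p x)" and a1: "\<alpha> x (s\<^sup>2 * p x) \<le> C_a"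
        using nonneg[OF zz(3)] abd[OF zz(3)] zz p0 by auto
      have sp: "0 \<le> s * p x" "s * p x \<le> p x" using zz p0 by (auto intro: mult_left_le_one_le)
      have "\<alpha> x (s\<^sup>2 * p x) * (s * p x) \<le> C_a * p x"
        by (rule mult_mono[OF a1 sp(2) Cnn sp(1)])
      then show "norm (case_prod f z) \<le> norm (C_a * p (snd z))"
        using a0 sp p0 Cnn by (simp add: zz f_def)
    qed
    have J: "J_energy \<alpha> \<Omega> G = (\<integral>s. (\<integral>x. f s x \<partial>M2) \<partial>M1)"
      unfolding J_energy_def M1_def[symmetric]
    proof (rule Bochner_Integration.integral_cong[OF refl])
      fix s assume s: "s \<in> space M1"
      show "a_form \<alpha> \<Omega> (\<lambda>x. s *\<^sub>R G x) (\<lambda>x. s *\<^sub>R G x) G = (\<integral>x. f s x \<partial>M2)"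
        unfolding a_form_def M2_def[symmetric]
        by (rule Bochner_Integration.integral_cong[OF refl])
           (simp add: f_def p_def power_mult_distrib power2_norm_eq_inner)
    qed
    show ?thesis
      using J P.Fubini_integral[OF fint] P.integrable_snd[OF fint] unfolding f_def p_def by simp
  qed
  define p where "p x = (norm (Gv x))\<^sup>2" for x
  define q where "q x = (norm (Gw x))\<^sup>2" for x
  define kv where "kv x = (LINT s|M1. \<alpha> x (s\<^sup>2 * (norm (Gv x))\<^sup>2) * (s * (norm (Gv x))\<^sup>2))" for x
  define kw where "kw x = (LINT s|M1. \<alpha> x (s\<^sup>2 * (norm (Gw x))\<^sup>2) * (s * (norm (Gw x))\<^sup>2))" for x
  have Jv: "J_energy \<alpha> \<Omega> Gv = (\<integral>x. kv x \<partial>M2)" and kvi: "integrable M2 kv"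
    using key[OF v] unfolding kv_def by auto
  have Jw: "J_energy \<alpha> \<Omega> Gw = (\<integral>x. kw x \<partial>M2)" and kwi: "integrable M2 kw"
    using key[OF w] unfolding kw_def by auto
  have Gvm: "Gv \<in> borel_measurable M2" and pint: "integrable M2 p"
    using v unfolding H10_def M2_def p_def by auto
  have Gwm: "Gw \<in> borel_measurable M2" and qint: "integrable M2 q"
    using w unfolding H10_def M2_def q_def by auto
  have qm: "q \<in> borel_measurable M2" using Gwm unfolding q_def by measurable
  have aqm: "(\<lambda>x. \<alpha> x (q x)) \<in> borel_measurable M2"
  proof (rule carath_meas[OF meas2, where g="\<lambda>x. x"])
    show "(\<lambda>x. x) \<in> measurable M2 M2" by simp
    show "q \<in> borel_measurable M2" by (rule qm)
    show "0 \<le> q z" for z by (simp add: q_def)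
    show "continuous_on {0..} (\<alpha> z)" if "z \<in> space M2" for z using that sp2 ac by auto
  qed
  have pm: "p \<in> borel_measurable M2" using pint by auto
  have bnd_q: "norm (\<alpha> x (q x) * r) \<le> norm (C_a * r)" if "x \<in> space M2" "0 \<le> r" for x r
  proof -
    have "0 \<le> \<alpha> x (q x)" "\<alpha> x (q x) \<le> C_a" using that nonneg abd sp2 by (auto simp: q_def)
    then show ?thesis using that Cnn by (simp add: mult_right_mono)
  qed
  have i1: "integrable M2 (\<lambda>x. \<alpha> x (q x) * p x)"
    by (rule Bochner_Integration.integrable_bound[OF integrable_mult_right[OF pint, of C_a]])
       (use aqm pm in simp, use bnd_q in \<open>auto simp: p_def\<close>)
  have i2: "integrable M2 (\<lambda>x. \<alpha> x (q x) * q x)"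
    by (rule Bochner_Integration.integrable_bound[OF integrable_mult_right[OF qint, of C_a]])
       (use aqm qm in simp, use bnd_q in \<open>auto simp: q_def\<close>)
  have av: "a_form \<alpha> \<Omega> Gw Gv Gv = (\<integral>x. \<alpha> x (q x) * p x \<partial>M2)"
    unfolding a_form_def M2_def p_def q_def by (simp add: power2_norm_eq_inner)
  have aw: "a_form \<alpha> \<Omega> Gw Gw Gw = (\<integral>x. \<alpha> x (q x) * q x \<partial>M2)"
    unfolding a_form_def M2_def q_def by (simp add: power2_norm_eq_inner)
  have pw: "kv x - kw x \<le> (\<alpha> x (q x) * p x - \<alpha> x (q x) * q x) / 2" if x: "x \<in> \<Omega>" for x
  proof -
    define T where "T = max (p x) (q x)"
    have p0: "0 \<le> p x" "p x \<le> T" and q0: "0 \<le> q x" "q x \<le> T" by (auto simp: T_def p_def q_def)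
    have acT: "continuous_on {0..T} (\<alpha> x)" by (rule continuous_on_subset[OF ac[OF x]]) auto
    have "kv x = integral {0..p x} (\<alpha> x) / 2"
      unfolding kv_def M1_def p_def[symmetric] by (rule prim_formula[OF acT p0])
    moreover have "kw x = integral {0..q x} (\<alpha> x) / 2"
      unfolding kw_def M1_def q_def[symmetric] by (rule prim_formula[OF acT q0])
    moreover have "integral {0..p x} (\<alpha> x) - integral {0..q x} (\<alpha> x) \<le> \<alpha> x (q x) * (p x - q x)"
      by (rule prim_ineq[OF acT p0 q0]) (use decr[OF x] in auto)
    ultimately show ?thesis by (simp add: algebra_simps divide_right_mono)
  qed
  have "J_energy \<alpha> \<Omega> Gv - J_energy \<alpha> \<Omega> Gw = (\<integral>x. kv x - kw x \<partial>M2)"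
    using Jv Jw Bochner_Integration.integral_diff[OF kvi kwi] by simp
  also have "\<dots> \<le> (\<integral>x. (\<alpha> x (q x) * p x - \<alpha> x (q x) * q x) / 2 \<partial>M2)"
    by (rule integral_mono) (use kvi kwi i1 i2 pw sp2 in auto)
  also have "\<dots> = ((\<integral>x. \<alpha> x (q x) * p x \<partial>M2) - (\<integral>x. \<alpha> x (q x) * q x \<partial>M2)) / 2"
    using Bochner_Integration.integral_diff[OF i1 i2] by simp
  finally show ?thesis using av aw by simp
qed

end
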